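(* For all real $x>0$, $$\big[\tilde\psi(x)\big]^2=\int_0^\infty dy\,y\,e^{-2xy}\int_0^1du\,\Big\{-1+2\Big(\coth y-\frac1y\Big)\Big(\coth yu-\frac{1}{yu}\Big)-\frac{2}{y(1-u)}\Big[u\Big(\coth yu-\frac1{yu}\Big)-\Big(\coth y-\frac1y\Big)\Big]\Big\}.$$
   Context: $\psi=\Gamma'/\Gamma$ is the digamma function and $\tilde\psi(x):=\psi(x)-\ln x+\frac{1}{2x}$ for $x>0$; it satisfies $\tilde\psi(x)=-\int_0^\infty ds\,e^{-2xs}\big(\coth s-\frac1s\big)$. *)

theory Defs
  imports "HOL-Analysis.Analysis"
begin

definition coth :: "real \<Rightarrow> real" where
  "coth y = cosh y / sinh y"

definition psi_tilde :: "real \<Rightarrow> real" where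
  "psi_tilde x = Digamma x - ln x + 1 / (2 * x)"

end

theory Submission
  imports Defs
begin


definition fq :: "real \<Rightarrow> real" where "fq s = coth s - 1 / s"

lemma sinh_ge_self: "0 \<le> (s::real) \<Longrightarrow> s \<le> sinh s"
  using real_le_x_sinh[of s] by (simp add: sinh_field_def exp_minus)

lemma sinh_le_s_cosh: "0 \<le> (s::real) \<Longrightarrow> sinh s \<le> s * cosh s"
proof -
  assume s: "0 \<le> s"
  have "(\<lambda>t. t * cosh t - sinh t) 0 \<le> (\<lambda>t. t * cosh t - sinh t) s"
    by (rule DERIV_nonneg_imp_nondecreasing[OF s])
       (rule exI conjI derivative_eq_intros refl | simp)+
  thus ?thesis by simp
qed

lemma fq_nonneg: "0 < s \<Longrightarrow> 0 \<le> fq s"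
  using sinh_le_s_cosh[of s]
  by (simp add: fq_def coth_def field_simps)

lemma fq_le1: "0 < s \<Longrightarrow> fq s \<le> 1"
proof -
  assume s: "0 < s"
  have ee: "1 + 2 * s \<le> exp (2 * s)" using exp_ge_add_one_self[of "2 * s"] by simp
  have "exp (2 * s) = exp s * exp s" by (simp flip: exp_add)
  hence "2 * s \<le> exp s * exp s - 1" using ee by simp
  hence "2 * s * exp (-s) \<le> (exp s * exp s - 1) * exp (-s)"
    by (intro mult_right_mono) auto
  hence "2 * s * exp (-s) \<le> exp s - exp (-s)"
    by (simp add: algebra_simps exp_minus field_simps)
  hence "s * (cosh s - sinh s) \<le> sinh s"
    by (simp add: cosh_field_def sinh_field_def field_simps)
  thus ?thesis using s
    by (simp add: fq_def coth_def field_simps)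
qed

lemma fq_deriv: "0 < s \<Longrightarrow> (fq has_real_derivative (1/s^2 - 1/(sinh s)^2)) (at s)"
  unfolding fq_def[abs_def] coth_def
  apply (rule derivative_eq_intros refl | simp)+
  apply (simp add: field_simps power2_eq_square)
  using hyperbolic_pythagoras[of s] by (simp add: power2_eq_square algebra_simps)

lemma fq_mono: "0 < a \<Longrightarrow> a \<le> b \<Longrightarrow> fq a \<le> fq b"
proof -
  assume a: "0 < a" and ab: "a \<le> b"
  show ?thesis
  proof (rule DERIV_nonneg_imp_nondecreasing[OF ab])
    fix t assume t: "a \<le> t" "t \<le> b"
    hence t0: "0 < t" using a by simp
    have "t \<le> sinh t" using sinh_ge_self[of t] t0 by simp
    hence "t^2 \<le> (sinh t)^2" using t0 by (intro power_mono) auto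
    hence "1/(sinh t)^2 \<le> 1/t^2" using t0 by (intro divide_left_mono) auto
    thus "\<exists>y. (fq has_real_derivative y) (at t) \<and> 0 \<le> y"
      using fq_deriv[OF t0] by auto
  qed
qed



definition Tf :: "real \<Rightarrow> real \<Rightarrow> real" where
  "Tf y u = fq y * fq (y * u) - (u * fq (y * u) - fq y) / (y * (1 - u))"

lemma alg0:
  fixes a b y Ca Cb Cy ia ib iy :: real
  assumes "a*ia = 1" "b*ib = 1" "y*iy = 1" "y = a + b" "Cy*(Ca+Cb) = 1 + Ca*Cb"
  shows "(Ca - ia)*(Cb - ib) = -1 + ((Cy - iy)*(Ca - ia) - (a*iy*(Ca-ia) - (Cy - iy))*ib) + ((Cy - iy)*(Cb-ib) - (b*iy*(Cb-ib) - (Cy-iy))*ia)"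
  using assms by algebra

lemma alg:
  fixes a b y Ca Cb Cy :: real
  assumes a: "a > 0" and b: "b > 0" and y: "y = a + b" and k: "Cy*(Ca+Cb) = 1 + Ca*Cb"
  shows "(Ca - 1/a)*(Cb - 1/b) = -1 + ((Cy - 1/y)*(Ca - 1/a) - (a/y*(Ca-1/a) - (Cy - 1/y))/b) + ((Cy - 1/y)*(Cb-1/b) - (b/y*(Cb-1/b) - (Cy-1/y))/a)"
  using alg0[of a "1/a" b "1/b" y "1/y" Cy Ca Cb] a b y k by (simp add: divide_inverse)

lemma fq_ab:
  assumes a: "0 < a" and b: "0 < b"
  shows "fq a * fq b = -1 + (fq (a+b) * fq a - (a/(a+b) * fq a - fq (a+b)) / b)
                          + (fq (a+b) * fq b - (b/(a+b) * fq b - fq (a+b)) / a)"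
proof -
  have sa: "sinh a > 0" and sb: "sinh b > 0" and sab: "sinh (a+b) > 0" using a b by auto
  have "coth a + coth b = sinh (a+b) / (sinh a * sinh b)"
    using sa sb unfolding coth_def sinh_add by (simp add: field_simps)
  hence "coth (a+b) * (coth a + coth b) = cosh (a+b) / (sinh a * sinh b)"
    using sab unfolding coth_def by simp
  also have "\<dots> = 1 + coth a * coth b"
    using sa sb unfolding coth_def cosh_add by (simp add: field_simps)
  finally have key: "coth (a+b) * (coth a + coth b) = 1 + coth a * coth b" .
  show ?thesis
    unfolding fq_def by (rule alg[OF a b refl key])
qed

lemma Tf_sum:
  assumes y: "0 < y" and u: "0 < u" "u < 1"
  shows "fq (y * u) * fq (y * (1 - u)) = -1 + Tf y u + Tf y (1 - u)"
proof -
  have "fq (y * u) * fq (y * (1 - u)) = -1 + (fq (y*u + y*(1-u)) * fq (y*u) - ((y*u)/(y*u + y*(1-u)) * fq (y*u) - fq (y*u + y*(1-u))) / (y*(1-u)))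
                          + (fq (y*u + y*(1-u)) * fq (y*(1-u)) - ((y*(1-u))/(y*u + y*(1-u)) * fq (y*(1-u)) - fq (y*u + y*(1-u))) / (y*u))"
    by (rule fq_ab) (use y u in auto)
  also have "y*u + y*(1-u) = y" by (simp add: algebra_simps)
  finally show ?thesis using y unfolding Tf_def by simp
qed

lemma Tf_nonneg:
  assumes y: "0 < y" and u: "0 < u" "u < 1"
  shows "0 \<le> Tf y u"
proof -
  have yu: "0 < y * u" using y u by simp
  have m: "fq (y*u) \<le> fq y" using fq_mono[OF yu] y u by simp
  have n: "0 \<le> fq (y*u)" "0 \<le> fq y" using fq_nonneg yu y by auto
  have "u * fq (y*u) \<le> fq (y*u)" using n u by (simp add: mult_left_le_one_le)
  hence "u * fq (y * u) - fq y \<le> 0" using m by simp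
  hence "(u * fq (y * u) - fq y) / (y * (1 - u)) \<le> 0" using y u
    by (intro divide_nonpos_pos) auto
  moreover have "0 \<le> fq y * fq (y*u)" using n by simp
  ultimately show ?thesis unfolding Tf_def by linarith
qed

lemma Tf_le2:
  assumes y: "0 < y" and u: "0 < u" "u < 1"
  shows "Tf y u \<le> 2"
proof -
  have "Tf y u \<le> Tf y u + Tf y (1 - u)" using Tf_nonneg[of y "1-u"] y u by simp
  also have "\<dots> = 1 + fq (y * u) * fq (y * (1 - u))" using Tf_sum[OF y u] by simp
  also have "fq (y * u) * fq (y * (1 - u)) \<le> 1 * 1"
    using y u fq_nonneg fq_le1 by (intro mult_mono) auto
  finally show ?thesis by simp
qed

lemma cosh_meas[measurable]: "cosh \<in> borel_measurable (borel::real measure)"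
  by (intro borel_measurable_continuous_onI continuous_intros)
lemma sinh_meas[measurable]: "sinh \<in> borel_measurable (borel::real measure)"
  by (intro borel_measurable_continuous_onI continuous_intros)

lemma set_integrable_const_Ioo: "set_integrable lborel {0<..<1::real} (\<lambda>_. c::real)"
  unfolding set_integrable_def
  by (rule integrableI_bounded_set[where A="{0<..<1}" and B="\<bar>c\<bar>"]) (auto simp: indicator_def)

lemma fq_measurable[measurable]: "fq \<in> borel_measurable borel"
  unfolding fq_def[abs_def] coth_def by measurable

lemma Tf_measurable[measurable]: "(\<lambda>u. Tf y u) \<in> borel_measurable borel"
  unfolding Tf_def by measurable

lemma Tf_integrable:
  assumes y: "0 < y"
  shows "set_integrable lborel {0<..<1} (\<lambda>u. Tf y u)"
  unfolding set_integrable_def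
proof (rule integrableI_bounded_set[where A="{0<..<1}" and B=2])
  show "AE x in lborel. x \<in> {0<..<1} \<longrightarrow> norm (indicator {0<..<1} x *\<^sub>R Tf y x) \<le> 2"
    using Tf_nonneg[OF y] Tf_le2[OF y] by auto
qed (auto simp: indicator_def)

lemma Tf_refl_integrable:
  assumes y: "0 < y"
  shows "set_integrable lborel {0<..<1} (\<lambda>u. Tf y (1 - u))"
  unfolding set_integrable_def
proof (rule integrableI_bounded_set[where A="{0<..<1}" and B=2])
  show "AE x in lborel. x \<in> {0<..<1} \<longrightarrow> norm (indicator {0<..<1} x *\<^sub>R Tf y (1 - x)) \<le> 2"
    using Tf_nonneg[OF y] Tf_le2[OF y] by auto
qed (auto simp: indicator_def)

lemma Tf_refl:
  assumes y: "0 < y"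
  shows "(LBINT u:{0<..<1}. Tf y (1 - u)) = (LBINT u:{0<..<1}. Tf y u)"
  unfolding set_lebesgue_integral_def
  by (subst lborel_integral_real_affine[where c="-1" and t=1])
     (auto intro!: Bochner_Integration.integral_cong simp: indicator_def)

lemma inner_eq:
  assumes y: "0 < y"
  shows "(LBINT u:{0<..<1}.
         - 1 + 2 * (coth y - 1 / y) * (coth (y * u) - 1 / (y * u))
         - 2 / (y * (1 - u)) * (u * (coth (y * u) - 1 / (y * u)) - (coth y - 1 / y)))
       = (LBINT u:{0<..<1}. fq (y * u) * fq (y * (1 - u)))"
proof -
  have m: "measure lborel {0<..<(1::real)} = 1" by simp
  have "(LBINT u:{0<..<1}.
         - 1 + 2 * (coth y - 1 / y) * (coth (y * u) - 1 / (y * u))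
         - 2 / (y * (1 - u)) * (u * (coth (y * u) - 1 / (y * u)) - (coth y - 1 / y)))
       = (LBINT u:{0<..<1}. (-1) + 2 * Tf y u)"
    by (rule set_lebesgue_integral_cong) (auto simp: Tf_def fq_def)
  also have "\<dots> = -1 + 2 * (LBINT u:{0<..<1}. Tf y u)"
    using Tf_integrable[OF y] m set_integrable_const_Ioo
    by (subst set_integral_add) (auto simp: set_integral_const)
  also have "\<dots> = (LBINT u:{0<..<1}. (-1) + Tf y u + Tf y (1 - u))"
    using Tf_integrable[OF y] Tf_refl_integrable[OF y] m Tf_refl[OF y] set_integrable_const_Ioo
    by (subst set_integral_add, force, force, subst set_integral_add) (auto simp: set_integral_const)
  also have "\<dots> = (LBINT u:{0<..<1}. fq (y * u) * fq (y * (1 - u)))"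
    by (rule set_lebesgue_integral_cong) (auto simp: Tf_sum[OF y])
  finally show ?thesis .
qed



lemma nn_set:
  assumes [measurable]: "h \<in> borel_measurable borel" and S[measurable]: "S \<in> sets borel"
    and nonneg: "\<And>s. s \<in> S \<Longrightarrow> 0 \<le> h s"
    and eq: "(\<integral>\<^sup>+s. ennreal (indicator S s * h s) \<partial>lborel) = ennreal r" and r: "0 \<le> r"
  shows "set_integrable lborel S h" "(LBINT s:S. h s) = r"
proof -
  have "has_bochner_integral lborel (\<lambda>s. indicator S s *\<^sub>R h s) r"
    by (rule has_bochner_integral_nn_integral)
       (use nonneg eq r in \<open>auto simp: indicator_def\<close>)
  thus "set_integrable lborel S h" "(LBINT s:S. h s) = r"
    unfolding set_integrable_def set_lebesgue_integral_def
    by (auto simp: has_bochner_integral_iff)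
qed

lemma laplace_nn:
  fixes c :: real
  assumes c: "0 < c"
  shows "(\<integral>\<^sup>+s. ennreal (indicator {0<..} s * exp (- c * s)) \<partial>lborel) = ennreal (1 / c)"
proof -
  have "(\<integral>\<^sup>+s. ennreal (indicator {0..} s * exp (- c * s)) \<partial>lborel) = ennreal (1 / c)"
    using nn_integral_has_integral_lebesgue[OF _ has_integral_exp_minus_to_infinity[OF c, of 0]]
    by simp
  moreover have "(\<integral>\<^sup>+s. ennreal (indicator {0<..} s * exp (- c * s)) \<partial>lborel)
      = (\<integral>\<^sup>+s. ennreal (indicator {0..} s * exp (- c * s)) \<partial>lborel)"
    by (intro nn_integral_cong_AE eventually_mono[OF AE_lborel_singleton[of 0]])
       (auto simp: indicator_def)
  ultimately show ?thesis by simp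
qed

lemma laplace:
  fixes c :: real
  assumes c: "0 < c"
  shows "set_integrable lborel {0<..} (\<lambda>s. exp (- c * s))"
        "(LBINT s:{0<..}. exp (- c * s)) = 1 / c"
  using nn_set[OF _ _ _ laplace_nn[OF c]] c by auto

lemma expdiff_nn:
  fixes a b s :: real
  assumes s: "0 < s" and ab: "a \<le> b"
  shows "(\<integral>\<^sup>+t. ennreal (indicator {a..b} t * exp (- t * s)) \<partial>lborel)
          = ennreal ((exp (- a * s) - exp (- b * s)) / s)"
proof -
  have "((\<lambda>t. exp (- t * s)) has_integral ((\<lambda>t. - exp (- t * s) / s) b - (\<lambda>t. - exp (- t * s) / s) a)) {a..b}"
    using ab s
    by (intro fundamental_theorem_of_calculus)
       (auto intro!: derivative_eq_intros simp flip: has_real_derivative_iff_has_vector_derivative)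
  hence "((\<lambda>t. exp (- t * s)) has_integral ((exp (- a * s) - exp (- b * s)) / s)) {a..b}"
    by (simp add: diff_divide_distrib)
  from nn_integral_has_integral_lebesgue[OF _ this] show ?thesis by simp
qed

lemma inv_nn:
  fixes a b :: real
  assumes a: "0 < a" and ab: "a \<le> b"
  shows "(\<integral>\<^sup>+t. ennreal (indicator {a..b} t * (1 / t)) \<partial>lborel) = ennreal (ln b - ln a)"
proof -
  have "((\<lambda>t. 1 / t) has_integral (ln b - ln a)) {a..b}"
    using ab a
    by (intro fundamental_theorem_of_calculus)
       (auto intro!: derivative_eq_intros simp flip: has_real_derivative_iff_has_vector_derivative)
  from nn_integral_has_integral_lebesgue[OF _ this] a show ?thesis by simp
qed

lemma frullani_nn:
  fixes a b :: real
  assumes a: "0 < a" and ab: "a \<le> b"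
  shows "(\<integral>\<^sup>+s. ennreal (indicator {0<..} s * ((exp (- a * s) - exp (- b * s)) / s)) \<partial>lborel)
          = ennreal (ln b - ln a)"
proof -
  have "(\<integral>\<^sup>+s. ennreal (indicator {0<..} s * ((exp (- a * s) - exp (- b * s)) / s)) \<partial>lborel)
      = (\<integral>\<^sup>+s. \<integral>\<^sup>+t. ennreal (indicator {a..b} t * exp (- t * s)) * indicator {0<..} s \<partial>lborel \<partial>lborel)"
  proof (intro nn_integral_cong)
    fix s :: real
    show "ennreal (indicator {0<..} s * ((exp (- a * s) - exp (- b * s)) / s))
        = (\<integral>\<^sup>+t. ennreal (indicator {a..b} t * exp (- t * s)) * indicator {0<..} s \<partial>lborel)"
    proof (cases "0 < s")
      case True
      thus ?thesis using expdiff_nn[OF True ab] by (simp add: nn_integral_multc)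
    qed (simp add: indicator_def)
  qed
  also have "\<dots> = (\<integral>\<^sup>+t. \<integral>\<^sup>+s. ennreal (indicator {a..b} t * exp (- t * s)) * indicator {0<..} s \<partial>lborel \<partial>lborel)"
    by (subst lborel_pair.Fubini') (auto simp: case_prod_unfold)
  also have "\<dots> = (\<integral>\<^sup>+t. ennreal (indicator {a..b} t * (1 / t)) \<partial>lborel)"
  proof (intro nn_integral_cong)
    fix t :: real
    show "(\<integral>\<^sup>+s. ennreal (indicator {a..b} t * exp (- t * s)) * indicator {0<..} s \<partial>lborel)
        = ennreal (indicator {a..b} t * (1 / t))"
    proof (cases "t \<in> {a..b}")
      case True
      hence t: "0 < t" using a by auto
      have "(\<integral>\<^sup>+s. ennreal (indicator {a..b} t * exp (- t * s)) * indicator {0<..} s \<partial>lborel)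
          = (\<integral>\<^sup>+s. ennreal (indicator {0<..} s * exp (- t * s)) \<partial>lborel)"
        using True by (intro nn_integral_cong) (auto simp: indicator_def)
      thus ?thesis using laplace_nn[OF t] True by simp
    qed (auto simp: indicator_def)
  qed
  also have "\<dots> = ennreal (ln b - ln a)" by (rule inv_nn[OF a ab])
  finally show ?thesis .
qed

lemma frullani:
  fixes a b :: real
  assumes a: "0 < a" and ab: "a \<le> b"
  shows "set_integrable lborel {0<..} (\<lambda>s. (exp (- a * s) - exp (- b * s)) / s)"
        "(LBINT s:{0<..}. (exp (- a * s) - exp (- b * s)) / s) = ln b - ln a"
proof -
  have nn: "0 \<le> (exp (- a * s) - exp (- b * s)) / s" if "s \<in> {0<..}" for s
  proof -
    have "- b * s \<le> - a * s" using that ab by (simp add: mult_right_mono)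
    hence "exp (- b * s) \<le> exp (- a * s)" by simp
    thus ?thesis using that by (intro divide_nonneg_pos) auto
  qed
  have "0 \<le> ln b - ln a" using a ab by simp
  thus "set_integrable lborel {0<..} (\<lambda>s. (exp (- a * s) - exp (- b * s)) / s)"
        "(LBINT s:{0<..}. (exp (- a * s) - exp (- b * s)) / s) = ln b - ln a"
    using nn_set[OF _ _ nn frullani_nn[OF a ab]] by auto
qed



definition Fx :: "real \<Rightarrow> real" where
  "Fx x = (LBINT s:{0<..}. exp (- 2 * x * s) * fq s)"

lemma exp2_laplace:
  fixes x :: real assumes x: "0 < x"
  shows "set_integrable lborel {0<..} (\<lambda>s. exp (- 2 * x * s))"
        "(LBINT s:{0<..}. exp (- 2 * x * s)) = 1 / (2 * x)"
  using laplace[of "2 * x"] x by simp_all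

lemma Fx_integrable:
  fixes x :: real assumes x: "0 < x"
  shows "set_integrable lborel {0<..} (\<lambda>s. exp (- 2 * x * s) * fq s)"
  unfolding set_integrable_def
proof (rule Bochner_Integration.integrable_bound)
  show "integrable lborel (\<lambda>s. indicator {0<..} s *\<^sub>R exp (- 2 * x * s))"
    using exp2_laplace(1)[OF x] unfolding set_integrable_def .
  show "AE s in lborel. norm (indicator {0<..} s *\<^sub>R (exp (- 2 * x * s) * fq s))
          \<le> norm (indicator {0<..} s *\<^sub>R exp (- 2 * x * s))"
    using fq_nonneg fq_le1 by (auto simp: indicator_def abs_mult)
  show "(\<lambda>s. indicator {0<..} s *\<^sub>R (exp (- 2 * x * s) * fq s)) \<in> borel_measurable lborel"
    by measurable
qed

lemma Fx_bounds:
  fixes x :: real assumes x: "0 < x"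
  shows "0 \<le> Fx x" "Fx x \<le> 1 / (2 * x)"
proof -
  show "0 \<le> Fx x"
    unfolding Fx_def set_lebesgue_integral_def
    by (intro Bochner_Integration.integral_nonneg) (auto simp: indicator_def fq_nonneg)
  have "Fx x \<le> (LBINT s:{0<..}. exp (- 2 * x * s))"
    unfolding Fx_def
    by (rule set_integral_mono[OF Fx_integrable[OF x] exp2_laplace(1)[OF x]])
       (use fq_le1 in auto)
  thus "Fx x \<le> 1 / (2 * x)" using exp2_laplace(2)[OF x] by simp
qed

lemma alg0b: "P * ip = 1 \<Longrightarrow> (P - 1) * iq = 1 \<Longrightarrow> s * iz = 1 \<Longrightarrow>
  e * ((P + 1) * iq - iz) - e * ip * ((P + 1) * iq - iz) = e + e * ip - (e - e * ip) * iz"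
  for e P s ip iq iz :: real by algebra
lemma algb: "e * ((P + 1) / (P - 1) - 1 / s) - e / P * ((P + 1) / (P - 1) - 1 / s)
       = e + e / P - (e - e / P) / s" if "P > 1" "s > 0" for e P s :: real
  using alg0b[of P "1/P" "1/(P-1)" s "1/s" e] that by (simp add: divide_inverse)

lemma pointwise_diff:
  fixes x s :: real assumes s: "0 < s"
  shows "exp (- 2 * x * s) * fq s - exp (- 2 * (x + 1) * s) * fq s
       = exp (- 2 * x * s) + exp (- 2 * (x + 1) * s)
         - (exp (- (2 * x) * s) - exp (- (2 * x + 2) * s)) / s"
proof -
  define E where "E = exp s"
  have E: "E > 1" using s by (simp add: E_def)
  have E2s: "exp (2 * s) = E^2" unfolding E_def power2_eq_square by (simp flip: exp_add)
  have "exp (- 2 * (x + 1) * s) = exp (- 2 * x * s - 2 * s)" by (simp add: algebra_simps)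
  also have "\<dots> = exp (- 2 * x * s) / exp (2 * s)" by (rule exp_diff)
  finally have e2: "exp (- 2 * (x + 1) * s) = exp (- 2 * x * s) / E^2" using E2s by simp
  have e3: "exp (- (2 * x + 2) * s) = exp (- 2 * x * s) / E^2"
  proof -
    have "- (2 * x + 2) * s = - 2 * (x + 1) * s" by (simp add: algebra_simps)
    thus ?thesis using e2 by simp
  qed
  have e4: "exp (- (2 * x) * s) = exp (- 2 * x * s)" by simp
  have P: "E^2 > 1" using one_less_power[OF E, of 2] by simp
  have h2: "(a/2)/(b/2) = a/(b::real)" for a b by simp
  have "coth s = ((E + inverse E)/2) / ((E - inverse E)/2)"
    unfolding coth_def cosh_field_def sinh_field_def E_def exp_minus ..
  also have "\<dots> = (E + inverse E) / (E - inverse E)" by (rule h2)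
  also have "E + inverse E = (E^2 + 1) / E" using E by (simp add: field_simps power2_eq_square)
  also have "E - inverse E = (E^2 - 1) / E" using E by (simp add: field_simps power2_eq_square)
  also have "(E^2 + 1) / E / ((E^2 - 1) / E) = (E^2 + 1) / (E^2 - 1)" using E by simp
  finally have c: "coth s = (E^2 + 1) / (E^2 - 1)" .
  show ?thesis
    unfolding e2 e3 e4 fq_def c by (rule algb[OF P s])
qed


lemma Fx_diff:
  fixes x :: real assumes x: "0 < x"
  shows "Fx x - Fx (x + 1) = 1 / (2 * x) + 1 / (2 * (x + 1)) - (ln (2 * x + 2) - ln (2 * x))"
proof -
  have x1: "0 < x + 1" using x by simp
  note i1 = Fx_integrable[OF x] and i2 = Fx_integrable[OF x1]
  note l1 = exp2_laplace[OF x] and l2 = exp2_laplace[OF x1]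
  note fr = frullani[of "2 * x" "2 * x + 2"]
  have "Fx x - Fx (x + 1) = (LBINT s:{0<..}. exp (- 2 * x * s) * fq s - exp (- 2 * (x + 1) * s) * fq s)"
    unfolding Fx_def using set_integral_diff(2)[OF i1 i2] by simp
  also have "\<dots> = (LBINT s:{0<..}. exp (- 2 * x * s) + exp (- 2 * (x + 1) * s)
         - (exp (- (2 * x) * s) - exp (- (2 * x + 2) * s)) / s)"
    by (rule set_lebesgue_integral_cong) (simp, intro allI impI pointwise_diff, simp)
  also have "\<dots> = (LBINT s:{0<..}. exp (- 2 * x * s) + exp (- 2 * (x + 1) * s))
         - (LBINT s:{0<..}. (exp (- (2 * x) * s) - exp (- (2 * x + 2) * s)) / s)"
    using x fr(1) l1(1) l2(1) by (intro set_integral_diff(2)) auto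
  also have "\<dots> = 1 / (2 * x) + 1 / (2 * (x + 1)) - (ln (2 * x + 2) - ln (2 * x))"
    using x fr(2) l1 l2 by (subst set_integral_add(2)) auto
  finally show ?thesis .
qed

lemma psi_diff:
  fixes x :: real assumes x: "0 < x"
  shows "psi_tilde x - psi_tilde (x + 1) = - (1 / (2 * x) + 1 / (2 * (x + 1))) + (ln (2 * x + 2) - ln (2 * x))"
proof -
  have "ln (2 * x + 2) = ln 2 + ln (x + 1)" using x ln_mult[of 2 "x+1"] by (simp add: algebra_simps)
  moreover have "ln (2 * x) = ln 2 + ln x" using x ln_mult[of 2 x] by simp
  moreover have "Digamma (x + 1) = Digamma x + 1 / x" using Digamma_plus1[of x] x by simp
  moreover have "1 / x = 1 / (2 * x) + 1 / (2 * x)" by simp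
  ultimately show ?thesis unfolding psi_tilde_def by linarith
qed

lemma periodic:
  fixes x :: real assumes x: "0 < x"
  shows "psi_tilde x + Fx x = psi_tilde (x + real n) + Fx (x + real n)"
proof (induction n)
  case (Suc n)
  have p: "0 < x + real n" using x by simp
  have eq: "x + real (Suc n) = (x + real n) + 1" by simp
  show ?case using Suc.IH Fx_diff[OF p] psi_diff[OF p] unfolding eq by linarith
qed simp

lemma Fx_lim:
  fixes x :: real assumes x: "0 < x"
  shows "(\<lambda>n. Fx (x + real n)) \<longlonglongrightarrow> 0"
proof (rule tendsto_sandwich[of "\<lambda>_. 0" _ _ "\<lambda>n. 1 / (2 * (x + real n))"])
  show "\<forall>\<^sub>F n in sequentially. 0 \<le> Fx (x + real n)"
  proof (intro always_eventually allI)
    fix n have "0 < x + real n" using x by simp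
    thus "0 \<le> Fx (x + real n)" by (rule Fx_bounds(1))
  qed
  show "\<forall>\<^sub>F n in sequentially. Fx (x + real n) \<le> 1 / (2 * (x + real n))"
  proof (intro always_eventually allI)
    fix n have "0 < x + real n" using x by simp
    thus "Fx (x + real n) \<le> 1 / (2 * (x + real n))" by (rule Fx_bounds(2))
  qed
  show "(\<lambda>n. 1 / (2 * (x + real n))) \<longlonglongrightarrow> 0" by real_asymp
qed simp

lemma psi_lim:
  fixes x :: real assumes x: "0 < x"
  shows "(\<lambda>n. psi_tilde (x + real n)) \<longlonglongrightarrow> 0"
proof -
  have D: "Digamma (x + real n) = Digamma x + (\<Sum>k<n. 1 / (x + real k))" for n
    using Polygamma_plus_of_nat[of n x 0] x by auto
  have L: "(\<lambda>m. ln (real m) - (\<Sum>k<m. inverse (x + real k))) \<longlonglongrightarrow> Digamma x"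
    using Digamma_LIMSEQ[of x] x by simp
  have "(\<lambda>n. Digamma x - (ln (real n) - (\<Sum>k<n. inverse (x + real k))) + (ln (real n) - ln (x + real n))
          + 1 / (2 * (x + real n))) \<longlonglongrightarrow> Digamma x - Digamma x + 0 + 0"
    by (intro tendsto_intros L) real_asymp+
  moreover have "psi_tilde (x + real n) = Digamma x - (ln (real n) - (\<Sum>k<n. inverse (x + real k))) + (ln (real n) - ln (x + real n))
          + 1 / (2 * (x + real n))" for n
    unfolding psi_tilde_def D by (simp add: divide_inverse)
  ultimately show ?thesis by simp
qed

lemma psi_tilde_eq:
  fixes x :: real assumes x: "0 < x"
  shows "psi_tilde x = - Fx x"
proof -
  have "(\<lambda>n. psi_tilde (x + real n) + Fx (x + real n)) \<longlonglongrightarrow> 0 + 0"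
    by (intro tendsto_intros psi_lim[OF x] Fx_lim[OF x])
  hence "(\<lambda>n. psi_tilde x + Fx x) \<longlonglongrightarrow> 0" using periodic[OF x] by simp
  hence "psi_tilde x + Fx x = 0" using LIMSEQ_const_iff by blast
  thus ?thesis by simp
qed



definition gg :: "real \<Rightarrow> real \<Rightarrow> ennreal" where
  "gg x s = ennreal (indicator {0<..} s * (exp (- 2 * x * s) * fq s))"

definition H :: "real \<Rightarrow> real" where
  "H y = (LBINT u:{0<..<1}. fq (y * u) * fq (y * (1 - u)))"

lemma gg_measurable[measurable]: "(\<lambda>s. gg x s) \<in> borel_measurable borel"
  unfolding gg_def by measurable

lemma H_measurable[measurable]: "H \<in> borel_measurable borel"
  unfolding H_def[abs_def] set_lebesgue_integral_def by measurable

lemma gg_nn: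
  fixes x :: real assumes x: "0 < x"
  shows "(\<integral>\<^sup>+s. gg x s \<partial>lborel) = ennreal (Fx x)"
  unfolding gg_def Fx_def set_lebesgue_integral_def
  using Fx_integrable[OF x] unfolding set_integrable_def
  by (subst nn_integral_eq_integral) (auto simp: indicator_def fq_nonneg)

lemma H_nn:
  fixes y :: real assumes y: "0 < y"
  shows "(\<integral>\<^sup>+u. ennreal (indicator {0<..<1} u * (fq (y * u) * fq (y * (1 - u)))) \<partial>lborel) = ennreal (H y)"
proof -
  have "set_integrable lborel {0<..<1} (\<lambda>u. fq (y * u) * fq (y * (1 - u)))"
    unfolding set_integrable_def
  proof (rule integrableI_bounded_set[where A="{0<..<1}" and B=1])
    show "AE u in lborel. u \<in> {0<..<1} \<longrightarrow> norm (indicator {0<..<1} u *\<^sub>R (fq (y * u) * fq (y * (1 - u)))) \<le> 1"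
    proof (intro AE_I2 impI)
      fix u :: real assume u: "u \<in> {0<..<1}"
      have "fq (y * u) * fq (y * (1 - u)) \<le> 1 * 1"
        using y u fq_nonneg fq_le1 by (intro mult_mono) auto
      moreover have "0 \<le> fq (y * u) * fq (y * (1 - u))"
        using y u fq_nonneg by auto
      ultimately show "norm (indicator {0<..<1} u *\<^sub>R (fq (y * u) * fq (y * (1 - u)))) \<le> 1"
        using u by simp
    qed
  qed (auto simp: indicator_def)
  thus ?thesis
    unfolding H_def set_lebesgue_integral_def set_integrable_def
    by (subst nn_integral_eq_integral) (auto simp: indicator_def fq_nonneg y)
qed

lemma conv_inner:
  fixes x y :: real assumes x: "0 < x"
  shows "(\<integral>\<^sup>+s. gg x s * gg x (y - s) \<partial>lborel)
       = ennreal (indicator {0<..} y * (y * exp (- 2 * x * y) * H y))"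
proof (cases "0 < y")
  case False
  have "(\<lambda>s. gg x s * gg x (y - s)) = (\<lambda>_. 0)"
    using False unfolding gg_def by (auto simp: indicator_def)
  thus ?thesis using False by simp
next
  case True
  have "(\<integral>\<^sup>+s. gg x s * gg x (y - s) \<partial>lborel)
      = ennreal \<bar>y\<bar> * (\<integral>\<^sup>+u. gg x (0 + y * u) * gg x (y - (0 + y * u)) \<partial>lborel)"
    using True by (intro nn_integral_real_affine) auto
  also have "(\<integral>\<^sup>+u. gg x (0 + y * u) * gg x (y - (0 + y * u)) \<partial>lborel)
      = (\<integral>\<^sup>+u. ennreal (exp (- 2 * x * y)) * ennreal (indicator {0<..<1} u * (fq (y * u) * fq (y * (1 - u)))) \<partial>lborel)"
  proof (intro nn_integral_cong)
    fix u :: real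
    show "gg x (0 + y * u) * gg x (y - (0 + y * u))
        = ennreal (exp (- 2 * x * y)) * ennreal (indicator {0<..<1} u * (fq (y * u) * fq (y * (1 - u))))"
    proof (cases "u \<in> {0<..<1}")
      case True
      have e: "exp (- 2 * x * (y * u)) * exp (- 2 * x * (y - y * u)) = exp (- 2 * x * y)"
        by (simp flip: exp_add add: algebra_simps)
      have yu: "y - y * u = y * (1 - u)" by (simp add: algebra_simps)
      have p: "0 < y * u" "0 < y * (1 - u)" using True \<open>0 < y\<close> by auto
      show ?thesis unfolding gg_def using True p fq_nonneg[OF p(1)] fq_nonneg[OF p(2)]
        by (simp add: yu ennreal_mult'[symmetric] flip: e) (simp add: algebra_simps flip: exp_add)
    next
      case False
      hence "\<not> (0 < y * u \<and> 0 < y - y * u)" using \<open>0 < y\<close>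
        by (auto simp: zero_less_mult_iff algebra_simps)
      thus ?thesis using False unfolding gg_def by (auto simp: indicator_def)
    qed
  qed
  also have "\<dots> = ennreal (exp (- 2 * x * y)) * ennreal (H y)"
    by (subst nn_integral_cmult) (auto simp: H_nn[OF True])
  finally show ?thesis using True
    by (simp add: ennreal_mult'[symmetric] H_def mult_ac)
qed


lemma H_nonneg: "0 < y \<Longrightarrow> 0 \<le> H y"
  unfolding H_def set_lebesgue_integral_def
  by (intro Bochner_Integration.integral_nonneg) (auto simp: indicator_def fq_nonneg)

lemma conv:
  fixes x :: real assumes x: "0 < x"
  shows "(\<integral>\<^sup>+y. ennreal (indicator {0<..} y * (y * exp (- 2 * x * y) * H y)) \<partial>lborel) = ennreal (Fx x ^ 2)"
proof -
  have tr: "(\<integral>\<^sup>+t. gg x s * gg x t \<partial>lborel) = (\<integral>\<^sup>+y. gg x s * gg x (y - s) \<partial>lborel)" for s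
    using nn_integral_real_affine[of "\<lambda>t. gg x s * gg x t" 1 "-s"] by simp
  have F0: "0 \<le> Fx x" using Fx_bounds(1)[OF x] .
  have "ennreal (Fx x ^ 2) = ennreal (Fx x) * ennreal (Fx x)"
    using F0 by (simp add: power2_eq_square ennreal_mult')
  also have "\<dots> = (\<integral>\<^sup>+s. gg x s \<partial>lborel) * (\<integral>\<^sup>+t. gg x t \<partial>lborel)"
    by (simp add: gg_nn[OF x])
  also have "\<dots> = (\<integral>\<^sup>+s. \<integral>\<^sup>+t. gg x s * gg x t \<partial>lborel \<partial>lborel)"
    by (simp add: nn_integral_cmult nn_integral_multc)
  also have "\<dots> = (\<integral>\<^sup>+s. \<integral>\<^sup>+y. gg x s * gg x (y - s) \<partial>lborel \<partial>lborel)"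
    by (simp only: tr)
  also have "\<dots> = (\<integral>\<^sup>+y. \<integral>\<^sup>+s. gg x s * gg x (y - s) \<partial>lborel \<partial>lborel)"
    by (rule lborel_pair.Fubini'[symmetric]) (unfold gg_def, measurable)
  also have "\<dots> = (\<integral>\<^sup>+y. ennreal (indicator {0<..} y * (y * exp (- 2 * x * y) * H y)) \<partial>lborel)"
    by (intro nn_integral_cong conv_inner[OF x])
  finally show ?thesis ..
qed

lemma conv_lebesgue:
  fixes x :: real assumes x: "0 < x"
  shows "(LBINT y:{0<..}. y * exp (- 2 * x * y) * H y) = Fx x ^ 2"
  by (rule nn_set(2)[OF _ _ _ conv[OF x]]) (auto intro!: mult_nonneg_nonneg H_nonneg)

theorem lemma2p1p1:
  fixes x :: real
  assumes "x > 0"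
  shows "(psi_tilde x)\<^sup>2 =
    (LBINT y:{0<..}. y * exp (- 2 * x * y) *
      (LBINT u:{0<..<1}.
         - 1 + 2 * (coth y - 1 / y) * (coth (y * u) - 1 / (y * u))
         - 2 / (y * (1 - u)) * (u * (coth (y * u) - 1 / (y * u)) - (coth y - 1 / y))))"
proof -
  have "(LBINT y:{0<..}. y * exp (- 2 * x * y) *
      (LBINT u:{0<..<1}.
         - 1 + 2 * (coth y - 1 / y) * (coth (y * u) - 1 / (y * u))
         - 2 / (y * (1 - u)) * (u * (coth (y * u) - 1 / (y * u)) - (coth y - 1 / y))))
      = (LBINT y:{0<..}. y * exp (- 2 * x * y) * H y)"
  proof (rule set_lebesgue_integral_cong)
    show "{(0::real)<..} \<in> sets lborel" by simp
    show "\<forall>y. y \<in> {0<..} \<longrightarrow> y * exp (- 2 * x * y) *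
      (LBINT u:{0<..<1}.
         - 1 + 2 * (coth y - 1 / y) * (coth (y * u) - 1 / (y * u))
         - 2 / (y * (1 - u)) * (u * (coth (y * u) - 1 / (y * u)) - (coth y - 1 / y)))
      = y * exp (- 2 * x * y) * H y"
    proof (intro allI impI)
      fix y :: real assume "y \<in> {0<..}"
      hence y: "0 < y" by simp
      show "y * exp (- 2 * x * y) *
      (LBINT u:{0<..<1}.
         - 1 + 2 * (coth y - 1 / y) * (coth (y * u) - 1 / (y * u))
         - 2 / (y * (1 - u)) * (u * (coth (y * u) - 1 / (y * u)) - (coth y - 1 / y)))
      = y * exp (- 2 * x * y) * H y"
        unfolding inner_eq[OF y] H_def by (rule refl)
    qed
  qed
  also have "\<dots> = Fx x ^ 2" by (rule conv_lebesgue[OF assms])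
  also have "\<dots> = (psi_tilde x)\<^sup>2" using psi_tilde_eq[OF assms] by simp
  finally show ?thesis ..
qed


end
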